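(* Let $(W,S)$ be a Coxeter system and partition $S=B\sqcup C$. Let $f,f'\in W_B$ and $g,g'\in W_C$. Then $\ell(fg)=\ell(gf)=\ell(f)+\ell(g)$. Let $s\in B$ be a simple reflection commuting with every element of $C$, and $t\in B$ arbitrary. Then: (1) $s\in\mathcal R(f)$ if and only if $s\in\mathcal R(gfg')$; (2) if $t\notin\mathcal R(f)$ then $t\notin\mathcal R(fg)$; (3) $t\in\mathcal R(f)$ if and only if $t\in\mathcal R(gf)$; (4) if $t\notin\mathcal R(f)$ then $t\notin\mathcal R(gfg')$; (5) if $\ell(ff')=\ell(f)+\ell(f')$, then $t\in\mathcal R(f')$ implies $t\in\mathcal R(fgf')$.
   Context: $W_B$, $W_C$ denote the standard parabolic subgroups generated by $B$ and $C$; $\ell$ is the length function and $\mathcal R(w)$ the right descent set $\{u\in S:\ell(wu)<\ell(w)\}$. *)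

theory Defs
  imports "HOL-Algebra.Algebra"
begin

definition word_eval :: "('a, 'b) monoid_scheme \<Rightarrow> 'a list \<Rightarrow> 'a" where
  "word_eval G ws = foldr (\<lambda>x y. x \<otimes>\<^bsub>G\<^esub> y) ws \<one>\<^bsub>G\<^esub>"

definition alt_word :: "'a \<Rightarrow> 'a \<Rightarrow> nat \<Rightarrow> 'a list" where
  "alt_word s t n = map (\<lambda>i. if even i then s else t) [0..<n]"

inductive cox_equiv :: "('a, 'b) monoid_scheme \<Rightarrow> 'a set \<Rightarrow> 'a list \<Rightarrow> 'a list \<Rightarrow> bool"
  for G S where
  refl: "cox_equiv G S w w"
| sym: "cox_equiv G S w v \<Longrightarrow> cox_equiv G S v w"
| trans: "cox_equiv G S u v \<Longrightarrow> cox_equiv G S v w \<Longrightarrow> cox_equiv G S u w"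
| cancel: "s \<in> S \<Longrightarrow> cox_equiv G S (u @ [s, s] @ v) (u @ v)"
| braid: "s \<in> S \<Longrightarrow> t \<in> S \<Longrightarrow> m = group.ord G (s \<otimes>\<^bsub>G\<^esub> t) \<Longrightarrow> 0 < m \<Longrightarrow>
          cox_equiv G S (u @ alt_word s t (2 * m) @ v) (u @ v)"

text \<open>(G,S) is a Coxeter system: S is a generating set of involutions of G and
  G is presented by the generators S and the relations s^2 = 1, (st)^(m(s,t)) = 1
  (i.e. every word over S representing 1 is reducible to the empty word by the relations).\<close>
definition coxeter_system :: "('a, 'b) monoid_scheme \<Rightarrow> 'a set \<Rightarrow> bool" where
  "coxeter_system G S \<longleftrightarrow>
     group G \<and> S \<subseteq> carrier G \<and> \<one>\<^bsub>G\<^esub> \<notin> S \<and>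
     (\<forall>s\<in>S. s \<otimes>\<^bsub>G\<^esub> s = \<one>\<^bsub>G\<^esub>) \<and>
     generate G S = carrier G \<and>
     (\<forall>ws. set ws \<subseteq> S \<longrightarrow> word_eval G ws = \<one>\<^bsub>G\<^esub> \<longrightarrow> cox_equiv G S ws [])"

definition cox_length :: "('a, 'b) monoid_scheme \<Rightarrow> 'a set \<Rightarrow> 'a \<Rightarrow> nat" where
  "cox_length G S w = (LEAST n. \<exists>ws. set ws \<subseteq> S \<and> length ws = n \<and> word_eval G ws = w)"

definition right_descents :: "('a, 'b) monoid_scheme \<Rightarrow> 'a set \<Rightarrow> 'a \<Rightarrow> 'a set" where
  "right_descents G S w = {u \<in> S. cox_length G S (w \<otimes>\<^bsub>G\<^esub> u) < cox_length G S w}"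

end

theory Submission
  imports Defs
begin

definition sd :: "'x set \<Rightarrow> 'x set \<Rightarrow> 'x set" where
  "sd A B = (A - B) \<union> (B - A)"

definition par :: "'x list \<Rightarrow> 'x set" where
  "par L = {r. odd (count_list L r)}"

lemma par_append: "par (L1 @ L2) = sd (par L1) (par L2)"
  unfolding par_def sd_def by auto

lemma par_double: "par (L @ L) = {}"
  unfolding par_def by auto

lemma par_Cons2: "par (x # x # L) = par L"
  unfolding par_def by auto

lemma par_Nil[simp]: "par [] = {}"
  unfolding par_def by auto

lemma par_sub: "par L \<subseteq> set L"
  unfolding par_def using count_notin by fastforce

lemma count_distinct: "distinct L \<Longrightarrow> count_list L r = (if r \<in> set L then 1 else 0)"
  by (induction L) auto

lemma par_distinct: "distinct L \<Longrightarrow> par L = set L"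
  unfolding par_def by (auto simp: count_distinct)

lemma sd_image: "inj_on f A \<Longrightarrow> P \<subseteq> A \<Longrightarrow> Q \<subseteq> A \<Longrightarrow> f ` sd P Q = sd (f ` P) (f ` Q)"
proof -
  assume a: "inj_on f A" "P \<subseteq> A" "Q \<subseteq> A"
  have "f ` (P - Q) = f ` P - f ` Q" using a by (intro inj_on_image_set_diff[of f A]) auto
  moreover have "f ` (Q - P) = f ` Q - f ` P" using a by (intro inj_on_image_set_diff[of f A]) auto
  ultimately show ?thesis unfolding sd_def by (simp add: image_Un)
qed

lemma par_single[simp]: "par [y] = {y}"
  unfolding par_def by auto

lemma par_map_inj: "inj_on f A \<Longrightarrow> set L \<subseteq> A \<Longrightarrow> par (map f L) = f ` par L"
proof (induction L)
  case Nil then show ?case by simp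
next
  case (Cons x L)
  have pm: "par (map f (x # L)) = sd {f x} (par (map f L))"
    using par_append[of "[f x]" "map f L"] by simp
  have p: "par (x # L) = sd {x} (par L)"
    using par_append[of "[x]" L] by simp
  have "par (map f L) = f ` par L" using Cons by auto
  moreover have "par L \<subseteq> A" using par_sub Cons.prems by fastforce
  moreover have "x \<in> A" using Cons.prems by auto
  ultimately have "sd (f ` {x}) (f ` par L) = f ` sd {x} (par L)"
    using Cons.prems(1) by (intro sd_image[of f A, symmetric]) auto
  then show ?case using pm p \<open>par (map f L) = f ` par L\<close> by (simp only: image_insert image_empty)
qed

lemma sd_empty[simp]: "sd A {} = A" "sd {} A = A"
  unfolding sd_def by auto

lemma finite_par[simp]: "finite (par L)"
  by (rule finite_subset[OF par_sub]) simp

lemma card_sd: "finite A \<Longrightarrow> finite B \<Longrightarrow> card (sd A B) + 2 * card (A \<inter> B) = card A + card B"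
proof -
  assume f: "finite A" "finite B"
  have d: "(A - B) \<inter> (B - A) = {}" by blast
  have "card (sd A B) = card (A - B) + card (B - A)"
    unfolding sd_def using f d by (intro card_Un_disjoint) auto
  moreover have "card (A - B) = card A - card (A \<inter> B)" using f by (simp add: card_Diff_subset_Int)
  moreover have "card (B - A) = card B - card (A \<inter> B)" using f by (simp add: card_Diff_subset_Int Int_commute)
  moreover have "card (A \<inter> B) \<le> card A" using f by (intro card_mono) auto
  moreover have "card (A \<inter> B) \<le> card B" using f by (intro card_mono) auto
  ultimately show ?thesis by linarith
qed

locale coxsys = group G for G :: "('a,'b) monoid_scheme" (structure) +
  fixes S :: "'a set"
  assumes cox: "coxeter_system G S"
begin

abbreviation ev where "ev \<equiv> word_eval G"
abbreviation len where "len \<equiv> cox_length G S"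

lemma S_carrier: "S \<subseteq> carrier G" using cox unfolding coxeter_system_def by blast
lemma one_notin_S: "\<one> \<notin> S" using cox unfolding coxeter_system_def by blast
lemma S_inv: "s \<in> S \<Longrightarrow> s \<otimes> s = \<one>" using cox unfolding coxeter_system_def by blast
lemma gen_S: "generate G S = carrier G" using cox unfolding coxeter_system_def by blast
lemma pres: "set ws \<subseteq> S \<Longrightarrow> ev ws = \<one> \<Longrightarrow> cox_equiv G S ws []"
  using cox unfolding coxeter_system_def by blast

lemma inv_cancel_l: "a \<in> carrier G \<Longrightarrow> x \<in> carrier G \<Longrightarrow> inv a \<otimes> (a \<otimes> x) = x"
  using m_assoc[of "inv a" a x] by simp
lemma inv_cancel_r: "a \<in> carrier G \<Longrightarrow> x \<in> carrier G \<Longrightarrow> a \<otimes> (inv a \<otimes> x) = x"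
  using m_assoc[of a "inv a" x] by simp

lemma S_c[simp]: "s \<in> S \<Longrightarrow> s \<in> carrier G" using S_carrier by auto

lemma S_inv'[simp]: "s \<in> S \<Longrightarrow> inv s = s"
  by (rule inv_equality) (auto simp: S_inv)

lemma ev_Nil[simp]: "ev [] = \<one>" by (simp add: word_eval_def)
lemma ev_Cons[simp]: "ev (x # ws) = x \<otimes> ev ws" by (simp add: word_eval_def)

lemma ev_c[simp]: "set ws \<subseteq> carrier G \<Longrightarrow> ev ws \<in> carrier G"
  by (induction ws) auto

lemma ev_cS[simp]: "set ws \<subseteq> S \<Longrightarrow> ev ws \<in> carrier G"
  using S_carrier by (intro ev_c) auto

lemma ev_append: "set ws \<subseteq> carrier G \<Longrightarrow> set vs \<subseteq> carrier G \<Longrightarrow> ev (ws @ vs) = ev ws \<otimes> ev vs"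
  by (induction ws) (auto simp: m_assoc)

lemma ev_appendS: "set ws \<subseteq> S \<Longrightarrow> set vs \<subseteq> S \<Longrightarrow> ev (ws @ vs) = ev ws \<otimes> ev vs"
  using S_carrier by (intro ev_append) auto

lemma ev_rev: "set ws \<subseteq> S \<Longrightarrow> ev (rev ws) = inv (ev ws)"
proof (induction ws)
  case Nil then show ?case by simp
next
  case (Cons x ws)
  then have "ev (rev (x # ws)) = ev (rev ws) \<otimes> ev [x]" by (simp add: ev_appendS)
  also have "\<dots> = inv (ev ws) \<otimes> inv x" using Cons by simp
  also have "\<dots> = inv (x \<otimes> ev ws)" using Cons by (simp add: inv_mult_group)
  finally show ?case by simp
qed

definition cj where "cj a x = a \<otimes> x \<otimes> inv a"

lemma cj_c[simp]: "a \<in> carrier G \<Longrightarrow> x \<in> carrier G \<Longrightarrow> cj a x \<in> carrier G"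
  by (simp add: cj_def)

lemma cj_one[simp]: "x \<in> carrier G \<Longrightarrow> cj \<one> x = x" by (simp add: cj_def)

lemma cj_mult: "a \<in> carrier G \<Longrightarrow> b \<in> carrier G \<Longrightarrow> x \<in> carrier G \<Longrightarrow> cj (a \<otimes> b) x = cj a (cj b x)"
  by (simp add: cj_def m_assoc inv_mult_group)

lemma cj_inv_cancel[simp]: "a \<in> carrier G \<Longrightarrow> x \<in> carrier G \<Longrightarrow> cj (inv a) (cj a x) = x"
  by (simp add: cj_def m_assoc inv_cancel_l)

lemma cj_inv_cancel2[simp]: "a \<in> carrier G \<Longrightarrow> x \<in> carrier G \<Longrightarrow> cj a (cj (inv a) x) = x"
  by (simp add: cj_def m_assoc inv_cancel_r)

lemma cj_inj: "a \<in> carrier G \<Longrightarrow> inj_on (cj a) (carrier G)"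
  by (metis cj_inv_cancel inj_onI)

lemma cj_prod: "a \<in> carrier G \<Longrightarrow> x \<in> carrier G \<Longrightarrow> y \<in> carrier G \<Longrightarrow> cj a (x \<otimes> y) = cj a x \<otimes> cj a y"
proof -
  assume c: "a \<in> carrier G" "x \<in> carrier G" "y \<in> carrier G"
  have "cj a x \<otimes> cj a y = a \<otimes> x \<otimes> (inv a \<otimes> a) \<otimes> y \<otimes> inv a"
    using c by (simp add: cj_def m_assoc inv_cancel_l)
  then show ?thesis using c by (simp add: cj_def m_assoc inv_cancel_l)
qed

lemma cj_self: "s \<in> carrier G \<Longrightarrow> cj s s = s"
  by (simp add: cj_def m_assoc)

lemma cj_S_S: "s \<in> S \<Longrightarrow> x \<in> carrier G \<Longrightarrow> cj s (cj s x) = x"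
  by (metis S_c S_inv' cj_inv_cancel)

fun rl :: "'a list \<Rightarrow> 'a list" where
  "rl [] = []"
| "rl (s # ws) = s # map (cj s) (rl ws)"

lemma length_rl[simp]: "length (rl ws) = length ws"
  by (induction ws) auto

lemma rl_c: "set ws \<subseteq> carrier G \<Longrightarrow> set (rl ws) \<subseteq> carrier G"
  by (induction ws) auto

lemma rl_cS: "set ws \<subseteq> S \<Longrightarrow> set (rl ws) \<subseteq> carrier G"
  using rl_c S_carrier by blast

lemma rl_append: "set ws \<subseteq> carrier G \<Longrightarrow> set vs \<subseteq> carrier G \<Longrightarrow>
   rl (ws @ vs) = rl ws @ map (cj (ev ws)) (rl vs)"
proof (induction ws)
  case Nil
  have "map (cj \<one>) (rl vs) = rl vs"
    using rl_c[OF Nil(2)] by (auto intro!: map_idI)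
  then show ?case by (simp add: map_idI)
next
  case (Cons x ws)
  have "map (cj x) (map (cj (ev ws)) (rl vs)) = map (cj (x \<otimes> ev ws)) (rl vs)"
    using rl_c[OF Cons(3)] Cons(2) by (auto simp: cj_mult)
  then show ?case using Cons by simp
qed

lemma rl_nth: "set ws \<subseteq> carrier G \<Longrightarrow> i < length ws \<Longrightarrow> rl ws ! i = cj (ev (take i ws)) (ws ! i)"
proof (induction ws arbitrary: i)
  case Nil then show ?case by simp
next
  case (Cons x ws)
  show ?case
  proof (cases i)
    case 0 then show ?thesis using Cons by (simp add: cj_def)
  next
    case (Suc j)
    then have "rl (x # ws) ! i = cj x (cj (ev (take j ws)) (ws ! j))"
      using Cons by simp
    also have "\<dots> = cj (x \<otimes> ev (take j ws)) (ws ! j)"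
      using Cons Suc set_take_subset[of j ws] by (subst cj_mult) auto
    finally show ?thesis using Suc by simp
  qed
qed


lemma alt_Suc: "alt_word s t (Suc n) = s # alt_word t s n"
proof -
  have "[0..<Suc n] = 0 # map Suc [0..<n]" by (simp add: map_Suc_upt upt_conv_Cons)
  then show ?thesis by (simp add: alt_word_def comp_def)
qed

lemma alt_set: "set (alt_word s t n) \<subseteq> {s, t}"
  by (auto simp: alt_word_def)

lemma alt_length[simp]: "length (alt_word s t n) = n"
  by (simp add: alt_word_def)

lemma pow_shift: "a \<in> carrier G \<Longrightarrow> b \<in> carrier G \<Longrightarrow> a \<otimes> (b \<otimes> a) [^] (j::nat) = (a \<otimes> b) [^] j \<otimes> a"
proof (induction j)
  case 0 then show ?case by simp
next
  case (Suc j)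
  have "a \<otimes> (b \<otimes> a) [^] Suc j = (a \<otimes> (b \<otimes> a) [^] j) \<otimes> (b \<otimes> a)"
    using Suc.prems by (simp add: m_assoc)
  also have "\<dots> = (a \<otimes> b) [^] j \<otimes> a \<otimes> (b \<otimes> a)" using Suc.prems by (simp add: Suc.IH)
  also have "\<dots> = (a \<otimes> b) [^] Suc j \<otimes> a" using Suc.prems by (simp add: m_assoc)
  finally show ?case .
qed

lemma alt_rl: "s \<in> S \<Longrightarrow> t \<in> S \<Longrightarrow> i < n \<Longrightarrow> rl (alt_word s t n) ! i = (s \<otimes> t) [^] i \<otimes> s"
proof (induction n arbitrary: s t i)
  case 0 then show ?case by simp
next
  case (Suc n)
  show ?case
  proof (cases i)
    case 0 then show ?thesis using Suc by (simp add: alt_Suc)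
  next
    case (Suc j)
    then have j: "j < n" using Suc.prems by simp
    have "rl (alt_word s t (Suc n)) ! i = cj s (rl (alt_word t s n) ! j)"
      using Suc j by (simp add: alt_Suc)
    also have "\<dots> = cj s ((t \<otimes> s) [^] j \<otimes> t)" using Suc.IH[of t s j] Suc.prems j by simp
    also have "\<dots> = (s \<otimes> (t \<otimes> s) [^] j) \<otimes> t \<otimes> s"
      using Suc.prems by (simp add: cj_def m_assoc)
    also have "\<dots> = (s \<otimes> t) [^] j \<otimes> s \<otimes> t \<otimes> s"
      using Suc.prems by (simp add: pow_shift)
    also have "\<dots> = (s \<otimes> t) [^] i \<otimes> s"
      using Suc.prems \<open>i = Suc j\<close> by (simp add: m_assoc)
    finally show ?thesis .
  qed
qed

lemma alt_ev: "s \<in> S \<Longrightarrow> t \<in> S \<Longrightarrow> ev (alt_word s t (2 * k)) = (s \<otimes> t) [^] k"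
proof (induction k)
  case 0 then show ?case by (simp add: alt_word_def)
next
  case (Suc k)
  have "alt_word s t (2 * Suc k) = s # t # alt_word s t (2 * k)"
    by (simp add: alt_Suc)
  then have "ev (alt_word s t (2 * Suc k)) = s \<otimes> (t \<otimes> (s \<otimes> t) [^] k)"
    using Suc by simp
  also have "\<dots> = (s \<otimes> t) \<otimes> (s \<otimes> t) [^] k" using Suc.prems
    by (simp add: m_assoc)
  also have "\<dots> = (s \<otimes> t) [^] Suc k" using Suc.prems
    by (intro nat_pow_Suc2[symmetric]) simp
  finally show ?case .
qed

lemma alt_par:
  assumes st: "s \<in> S" "t \<in> S" and m: "m = group.ord G (s \<otimes> t)"
  shows "par (rl (alt_word s t (2 * m))) = {}"
proof -
  define L where "L = rl (alt_word s t (2 * m))"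
  define x where "x = s \<otimes> t"
  have xc: "x \<in> carrier G" using st by (simp add: x_def)
  have xm: "x [^] m = \<one>" using xc m by (simp add: x_def)
  have Li: "i < 2 * m \<Longrightarrow> L ! i = x [^] i \<otimes> s" for i
    using alt_rl[OF st] by (simp add: L_def x_def)
  have "L = take m L @ take m L"
  proof (rule nth_equalityI)
    show "length L = length (take m L @ take m L)" by (simp add: L_def)
  next
    fix i assume "i < length L"
    then have i: "i < 2 * m" by (simp add: L_def)
    show "L ! i = (take m L @ take m L) ! i"
    proof (cases "i < m")
      case True then show ?thesis by (simp add: nth_append L_def)
    next
      case False
      then have "(take m L @ take m L) ! i = L ! (i - m)" using i by (simp add: nth_append L_def)
      also have "\<dots> = x [^] (i - m) \<otimes> s" using i by (simp add: Li)
      also have "\<dots> = x [^] (i - m) \<otimes> x [^] m \<otimes> s" using xm xc st by simp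
      also have "\<dots> = x [^] i \<otimes> s" using False xc by (simp add: nat_pow_mult)
      also have "\<dots> = L ! i" using i by (simp add: Li)
      finally show ?thesis by simp
    qed
  qed
  then have "par L = par (take m L @ take m L)" by simp
  then show ?thesis using par_double by (simp add: L_def)
qed

lemma par_sd_empty: "sd A B = {} \<longleftrightarrow> A = B"
  unfolding sd_def by auto

lemma equiv_inv:
  "cox_equiv G S u v \<Longrightarrow> (set u \<subseteq> S \<longleftrightarrow> set v \<subseteq> S) \<and>
     (set u \<subseteq> S \<longrightarrow> ev u = ev v \<and> par (rl u) = par (rl v))"
proof (induction rule: cox_equiv.induct)
  case (refl w) then show ?case by simp
next
  case (sym w v) then show ?case by auto
next
  case (trans u v w) then show ?case by auto
next
  case (cancel s u v)
  show ?case
  proof (intro conjI impI)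
    show "(set (u @ [s, s] @ v) \<subseteq> S) = (set (u @ v) \<subseteq> S)" using cancel by auto
  next
    assume a: "set (u @ [s, s] @ v) \<subseteq> S"
    then have u: "set u \<subseteq> S" and v: "set v \<subseteq> S" by auto
    have ss: "s \<otimes> (s \<otimes> ev v) = ev v" using cancel v S_inv[of s] by (simp add: m_assoc[symmetric])
    show "ev (u @ [s, s] @ v) = ev (u @ v)"
      using u v cancel ss by (simp add: ev_appendS)
    have ssv: "rl ([s, s] @ v) = s # s # rl v"
    proof -
      have "map (cj s) (map (cj s) (rl v)) = rl v"
        using rl_cS[OF v] cancel by (auto intro!: map_idI simp: cj_S_S)
      then show ?thesis using cancel by (simp add: cj_self)
    qed
    have uc: "set u \<subseteq> carrier G" and vc: "set v \<subseteq> carrier G" and sc: "set ([s,s] @ v) \<subseteq> carrier G"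
      using u v cancel S_carrier by auto
    have "rl (u @ [s, s] @ v) = rl u @ map (cj (ev u)) (rl ([s, s] @ v))"
      by (rule rl_append[OF uc sc])
    also have "\<dots> = rl u @ map (cj (ev u)) (s # s # rl v)" by (simp only: ssv)
    finally have "rl (u @ [s, s] @ v) = rl u @ map (cj (ev u)) (s # s # rl v)" .
    then have "par (rl (u @ [s, s] @ v)) = sd (par (rl u)) (par (map (cj (ev u)) (rl v)))"
      by (simp add: par_append par_Cons2)
    also have "\<dots> = par (rl (u @ v))"
      using rl_append[OF uc vc] by (simp add: par_append)
    finally show "par (rl (u @ [s, s] @ v)) = par (rl (u @ v))" .
  qed
next
  case (braid s t m u v)
  define A where "A = alt_word s t (2 * m)"
  have AS: "set A \<subseteq> S" using alt_set[of s t "2*m"] braid by (auto simp: A_def)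
  have Aev: "ev A = \<one>" using alt_ev[of s t m] braid by (simp add: A_def)
  have Apar: "par (rl A) = {}" using alt_par[of s t m] braid by (simp add: A_def)
  show ?case
  proof (intro conjI impI)
    show "(set (u @ alt_word s t (2 * m) @ v) \<subseteq> S) = (set (u @ v) \<subseteq> S)"
      using AS by (auto simp: A_def)
  next
    assume a: "set (u @ alt_word s t (2 * m) @ v) \<subseteq> S"
    then have u: "set u \<subseteq> S" and v: "set v \<subseteq> S" by auto
    show "ev (u @ alt_word s t (2 * m) @ v) = ev (u @ v)"
      using u v AS Aev by (simp add: ev_appendS A_def[symmetric])
    have uc: "set u \<subseteq> carrier G" and vc: "set v \<subseteq> carrier G" and Ac: "set A \<subseteq> carrier G"
      using u v AS S_carrier by auto
    have "map (cj \<one>) (rl v) = rl v" using rl_c[OF vc] by (auto intro!: map_idI)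
    then have "rl (A @ v) = rl A @ rl v" using rl_append[OF Ac vc] Aev by simp
    then have "rl (u @ A @ v) = rl u @ map (cj (ev u)) (rl A) @ map (cj (ev u)) (rl v)"
      using rl_append[of u "A @ v"] uc vc Ac by simp
    then have "par (rl (u @ A @ v)) = sd (par (rl u)) (sd (par (map (cj (ev u)) (rl A))) (par (map (cj (ev u)) (rl v))))"
      by (simp add: par_append)
    moreover have "par (map (cj (ev u)) (rl A)) = {}"
    proof -
      have "rl A = take m (rl A) @ take m (rl A) \<or> True" by simp
      have "par (map (cj (ev u)) (rl A)) = cj (ev u) ` par (rl A)"
        using rl_c[OF Ac] uc by (intro par_map_inj[of _ "carrier G"] cj_inj) auto
      then show ?thesis using Apar by simp
    qed
    ultimately have "par (rl (u @ A @ v)) = par (rl (u @ v))"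
      using rl_append[OF uc vc] by (simp add: par_append)
    then show "par (rl (u @ alt_word s t (2 * m) @ v)) = par (rl (u @ v))" by (simp add: A_def)
  qed
qed


lemma gen_words: "w \<in> generate G P \<Longrightarrow> P \<subseteq> S \<Longrightarrow> \<exists>ws. set ws \<subseteq> P \<and> ev ws = w"
proof (induction rule: generate.induct)
  case one then show ?case by (intro exI[of _ "[]"]) simp
next
  case (incl h) then show ?case by (intro exI[of _ "[h]"]) auto
next
  case (inv h) then show ?case by (intro exI[of _ "[h]"]) auto
next
  case (eng h1 h2)
  then obtain ws vs where "set ws \<subseteq> P" "ev ws = h1" "set vs \<subseteq> P" "ev vs = h2" by blast
  then show ?case using eng.prems by (intro exI[of _ "ws @ vs"]) (auto simp: ev_appendS)
qed

lemma words_gen: "P \<subseteq> S \<Longrightarrow> set ws \<subseteq> P \<Longrightarrow> ev ws \<in> generate G P"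
proof (induction ws)
  case Nil then show ?case by (simp add: generate.one)
next
  case (Cons x ws) then show ?case by (simp add: generate.eng generate.incl)
qed

lemma gen_sub: "P \<subseteq> S \<Longrightarrow> generate G P \<subseteq> carrier G"
  using generate_incl S_carrier by blast

lemma gen_subgroup: "P \<subseteq> S \<Longrightarrow> subgroup (generate G P) G"
  using generate_is_subgroup S_carrier by blast

lemma carrier_word: "w \<in> carrier G \<Longrightarrow> \<exists>ws. set ws \<subseteq> S \<and> ev ws = w"
  using gen_words[of w S] gen_S by auto

lemma par_welldef:
  assumes ws: "set ws \<subseteq> S" and vs: "set vs \<subseteq> S" and e: "ev ws = ev vs"
  shows "par (rl ws) = par (rl vs)"
proof -
  have key: "set us \<subseteq> S \<Longrightarrow> ev us = ev vs \<Longrightarrow> sd (par (rl us)) (par (map (cj (ev vs)) (rl (rev vs)))) = {}" for us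
  proof -
    assume us: "set us \<subseteq> S" and e2: "ev us = ev vs"
    have rv: "set (rev vs) \<subseteq> S" using vs by simp
    have "ev (us @ rev vs) = \<one>" using us rv e2 vs by (simp add: ev_appendS ev_rev)
    then have "cox_equiv G S (us @ rev vs) []" using pres us rv by simp
    then have "par (rl (us @ rev vs)) = {}" using equiv_inv us rv by fastforce
    moreover have "rl (us @ rev vs) = rl us @ map (cj (ev us)) (rl (rev vs))"
      using us rv S_carrier by (intro rl_append) auto
    ultimately show ?thesis using e2 by (simp add: par_append)
  qed
  have "sd (par (rl ws)) (par (map (cj (ev vs)) (rl (rev vs)))) = {}" using key ws e by blast
  moreover have "sd (par (rl vs)) (par (map (cj (ev vs)) (rl (rev vs)))) = {}" using key vs by blast
  ultimately show ?thesis by (simp add: par_sd_empty)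
qed

definition N where "N w = par (rl (SOME ws. set ws \<subseteq> S \<and> ev ws = w))"

lemma N_word: "set ws \<subseteq> S \<Longrightarrow> N (ev ws) = par (rl ws)"
proof -
  assume ws: "set ws \<subseteq> S"
  define vs where "vs = (SOME vs. set vs \<subseteq> S \<and> ev vs = ev ws)"
  have "set vs \<subseteq> S \<and> ev vs = ev ws" unfolding vs_def
    using someI[of "\<lambda>vs. set vs \<subseteq> S \<and> ev vs = ev ws" ws] ws by simp
  then show ?thesis unfolding N_def vs_def[symmetric] using par_welldef ws by metis
qed

definition del :: "nat \<Rightarrow> 'a list \<Rightarrow> 'a list" where "del i ws = take i ws @ drop (Suc i) ws"

lemma del_set: "set (del i ws) \<subseteq> set ws"
  unfolding del_def using set_take_subset set_drop_subset by fastforce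

lemma del_length: "i < length ws \<Longrightarrow> length (del i ws) = length ws - 1"
  unfolding del_def by simp

lemma len_le: "set ws \<subseteq> S \<Longrightarrow> len (ev ws) \<le> length ws"
  unfolding cox_length_def by (rule Least_le) blast

lemma len_word: "w \<in> carrier G \<Longrightarrow> \<exists>ws. set ws \<subseteq> S \<and> ev ws = w \<and> length ws = len w"
proof -
  assume "w \<in> carrier G"
  then obtain ws where "set ws \<subseteq> S" "ev ws = w" using carrier_word by blast
  then have "\<exists>n ws. set ws \<subseteq> S \<and> length ws = n \<and> ev ws = w" by blast
  then have "\<exists>ws. set ws \<subseteq> S \<and> length ws = (LEAST n. \<exists>ws. set ws \<subseteq> S \<and> length ws = n \<and> ev ws = w) \<and> ev ws = w"
    by (rule LeastI_ex)
  then show ?thesis unfolding cox_length_def by blast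
qed

lemma exch_nth:
  assumes ws: "set ws \<subseteq> S" and i: "i < length ws"
  shows "rl ws ! i \<otimes> ev ws = ev (del i ws)"
proof -
  define a where "a = ev (take i ws)"
  define d where "d = ev (drop (Suc i) ws)"
  define s where "s = ws ! i"
  have tS: "set (take i ws) \<subseteq> S" and dS: "set (drop (Suc i) ws) \<subseteq> S"
    using ws set_take_subset set_drop_subset by fastforce+
  have sS: "s \<in> S" using ws i by (auto simp: s_def)
  have ac: "a \<in> carrier G" and dc: "d \<in> carrier G" using tS dS by (auto simp: a_def d_def)
  have "ws = take i ws @ s # drop (Suc i) ws" using i by (simp add: s_def id_take_nth_drop)
  then have e: "ev ws = a \<otimes> (s \<otimes> d)"
    using tS dS sS by (metis a_def d_def ev_Cons ev_appendS insert_subset list.simps(15))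
  have r: "rl ws ! i = a \<otimes> s \<otimes> inv a" using rl_nth[of ws i] ws i S_carrier
    by (auto simp: cj_def a_def s_def)
  have "rl ws ! i \<otimes> ev ws = a \<otimes> (s \<otimes> (s \<otimes> d))" using r e ac dc sS by (simp add: m_assoc inv_cancel_l)
  also have "\<dots> = a \<otimes> d" using sS dc S_inv[of s] by (simp add: m_assoc[symmetric])
  also have "\<dots> = ev (del i ws)" using tS dS by (simp add: del_def ev_appendS a_def d_def)
  finally show ?thesis .
qed

lemma rl_invol:
  assumes ws: "set ws \<subseteq> S" and r: "r \<in> set (rl ws)"
  shows "r \<otimes> r = \<one>" "r \<noteq> \<one>" "r \<in> carrier G"
proof -
  obtain i where i: "i < length ws" "r = rl ws ! i" using r by (auto simp: in_set_conv_nth)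
  define a where "a = ev (take i ws)"
  define s where "s = ws ! i"
  have tS: "set (take i ws) \<subseteq> S" using ws set_take_subset by fastforce
  have sS: "s \<in> S" using ws i by (auto simp: s_def)
  have ac: "a \<in> carrier G" using tS by (simp add: a_def)
  have rr: "r = cj a s" using rl_nth[of ws i] ws i S_carrier by (auto simp: a_def s_def)
  have "cj a s \<otimes> cj a s = cj a (s \<otimes> s)" using cj_prod ac sS by simp
  then show "r \<otimes> r = \<one>" using rr ac sS S_inv[of s] by (simp add: cj_def)
  show "r \<in> carrier G" using rr ac sS by simp
  show "r \<noteq> \<one>"
  proof
    assume r1: "r = \<one>"
    have "s = cj (inv a) (cj a s)" using ac sS by simp
    also have "\<dots> = cj (inv a) \<one>" using rr r1 by simp
    also have "\<dots> = \<one>" using ac by (simp add: cj_def)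
    finally show False using sS one_notin_S by simp
  qed
qed

lemma N_sub_rl: "set ws \<subseteq> S \<Longrightarrow> N (ev ws) \<subseteq> set (rl ws)"
  by (simp add: N_word par_sub)

lemma N_c: "w \<in> carrier G \<Longrightarrow> N w \<subseteq> carrier G"
proof -
  assume "w \<in> carrier G"
  then obtain ws where ws: "set ws \<subseteq> S" "ev ws = w" using carrier_word by blast
  then have "N w \<subseteq> set (rl ws)" using N_sub_rl by blast
  then show ?thesis using rl_cS[OF ws(1)] by blast
qed

lemma N_finite: "w \<in> carrier G \<Longrightarrow> finite (N w)"
proof -
  assume "w \<in> carrier G"
  then obtain ws where ws: "set ws \<subseteq> S" "ev ws = w" using carrier_word by blast
  then show ?thesis using N_word[OF ws(1)] by simp
qed

lemma N_one: "N \<one> = {}"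
  using N_word[of "[]"] by simp

lemma N_S: "s \<in> S \<Longrightarrow> N s = {s}"
  using N_word[of "[s]"] by simp

lemma N_mult:
  assumes x: "x \<in> carrier G" and y: "y \<in> carrier G"
  shows "N (x \<otimes> y) = sd (N x) (cj x ` N y)"
proof -
  obtain ws vs where ws: "set ws \<subseteq> S" "ev ws = x" and vs: "set vs \<subseteq> S" "ev vs = y"
    using carrier_word x y by blast
  have "N (x \<otimes> y) = par (rl (ws @ vs))" using N_word[of "ws @ vs"] ws vs by (simp add: ev_appendS)
  also have "\<dots> = par (rl ws @ map (cj x) (rl vs))"
    using rl_append[of ws vs] ws vs S_carrier by auto
  also have "\<dots> = sd (par (rl ws)) (cj x ` par (rl vs))"
    using par_map_inj[OF cj_inj[OF x] rl_cS[OF vs(1)]] by (simp only: par_append)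
  also have "\<dots> = sd (N x) (cj x ` N y)" using N_word ws vs by metis
  finally show ?thesis .
qed

lemma N_exchange:
  assumes ws: "set ws \<subseteq> S" and r: "r \<in> N (ev ws)"
  shows "\<exists>i < length ws. r \<otimes> ev ws = ev (del i ws)"
proof -
  have "r \<in> set (rl ws)" using N_sub_rl ws r by blast
  then obtain i where "i < length ws" "r = rl ws ! i" by (auto simp: in_set_conv_nth)
  then show ?thesis using exch_nth ws by blast
qed

lemma N_card: "w \<in> carrier G \<Longrightarrow> card (N w) = len w"
proof -
  assume w: "w \<in> carrier G"
  obtain ws where ws: "set ws \<subseteq> S" "ev ws = w" "length ws = len w" using len_word w by blast
  have dist: "distinct (rl ws)"
  proof (rule ccontr)
    assume "\<not> distinct (rl ws)"
    then obtain i j where ij: "i < j" "j < length ws" "rl ws ! i = rl ws ! j"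
      by (auto simp: distinct_conv_nth) (metis length_rl linorder_neqE_nat)
    define r where "r = rl ws ! j"
    have rin: "r \<in> set (rl ws)" using ij by (simp add: r_def)
    have e1: "r \<otimes> ev ws = ev (del j ws)" using exch_nth[OF ws(1)] ij ws(3) by (simp add: r_def)
    have djS: "set (del j ws) \<subseteq> S" using del_set ws by blast
    have ilt: "i < length (del j ws)" using ij by (simp add: del_length)
    have "rl (del j ws) ! i = cj (ev (take i (del j ws))) (del j ws ! i)"
      using rl_nth djS ilt S_carrier by blast
    also have "\<dots> = cj (ev (take i ws)) (ws ! i)"
      using ij by (simp add: del_def nth_append min_def)
    also have "\<dots> = r" using rl_nth[of ws i] ws ij S_carrier by (auto simp: r_def)
    finally have "rl (del j ws) ! i = r" .
    then have e2: "r \<otimes> ev (del j ws) = ev (del i (del j ws))" using exch_nth djS ilt by metis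
    have rc: "r \<in> carrier G" using rl_invol ws rin by blast
    have "ev (del i (del j ws)) = r \<otimes> (r \<otimes> ev ws)" using e1 e2 by simp
    also have "\<dots> = (r \<otimes> r) \<otimes> ev ws" using rc ws(1) by (simp add: m_assoc)
    finally have "ev (del i (del j ws)) = (r \<otimes> r) \<otimes> ev ws" .
    then have "ev (del i (del j ws)) = w" using rl_invol(1)[OF ws(1) rin] ws w by simp
    moreover have "length (del i (del j ws)) < len w"
      using ij ilt ws by (simp add: del_length)
    moreover have "set (del i (del j ws)) \<subseteq> S" using del_set djS by blast
    ultimately show False using len_le by fastforce
  qed
  have "N w = set (rl ws)" using N_word ws par_distinct dist by metis
  then show ?thesis using dist ws by (simp add: distinct_card)
qed


lemma len_mult:
  assumes x: "x \<in> carrier G" and y: "y \<in> carrier G"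
  shows "len (x \<otimes> y) + 2 * card (N x \<inter> cj x ` N y) = len x + len y"
proof -
  have fx: "finite (N x)" and fy: "finite (cj x ` N y)" using N_finite x y by auto
  have ci: "card (cj x ` N y) = card (N y)"
    using card_image inj_on_subset[OF cj_inj[OF x] N_c[OF y]] by blast
  have xy: "x \<otimes> y \<in> carrier G" using x y by simp
  have c1: "card (sd (N x) (cj x ` N y)) = len (x \<otimes> y)"
    using N_card[OF xy] N_mult[OF x y] by simp
  have c2: "card (N x) = len x" "card (N y) = len y" using N_card x y by auto
  show ?thesis using card_sd[OF fx fy] c1 c2 ci by linarith
qed

lemma len_add_iff:
  assumes x: "x \<in> carrier G" and y: "y \<in> carrier G"
  shows "len (x \<otimes> y) = len x + len y \<longleftrightarrow> N x \<inter> cj x ` N y = {}"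
proof -
  have fin: "finite (N x \<inter> cj x ` N y)" using N_finite x by auto
  have "len (x \<otimes> y) = len x + len y \<longleftrightarrow> card (N x \<inter> cj x ` N y) = 0"
    using len_mult[OF x y] by linarith
  also have "\<dots> \<longleftrightarrow> N x \<inter> cj x ` N y = {}" using fin by simp
  finally show ?thesis .
qed

lemma N_mult_disj:
  assumes x: "x \<in> carrier G" and y: "y \<in> carrier G" and d: "len (x \<otimes> y) = len x + len y"
  shows "N (x \<otimes> y) = N x \<union> cj x ` N y"
proof -
  have e: "N x \<inter> cj x ` N y = {}" using len_add_iff[OF x y] d by simp
  show ?thesis using N_mult[OF x y] e unfolding sd_def by blast
qed

lemma len_one: "len \<one> = 0"
  using N_card[of \<one>] N_one by simp

lemma len_S: "s \<in> S \<Longrightarrow> len s = 1"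
  using N_card[of s] N_S by simp

lemma len_zero: "w \<in> carrier G \<Longrightarrow> len w = 0 \<Longrightarrow> w = \<one>"
  using len_word by fastforce

lemma left_len:
  assumes w: "w \<in> carrier G" and s: "s \<in> S"
  shows "(s \<in> N w \<longrightarrow> len (s \<otimes> w) + 1 = len w) \<and> (s \<notin> N w \<longrightarrow> len (s \<otimes> w) = len w + 1)"
proof -
  have sc: "s \<in> carrier G" using s by simp
  have iff: "s \<in> cj s ` N w \<longleftrightarrow> s \<in> N w"
  proof
    assume "s \<in> cj s ` N w"
    then obtain r where r: "r \<in> N w" "s = cj s r" by blast
    have "r = cj s (cj s r)" using cj_S_S s N_c[OF w] r(1) by auto
    then have "r = s" using r(2) cj_self sc by simp
    then show "s \<in> N w" using r by simp
  next
    assume "s \<in> N w"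
    then show "s \<in> cj s ` N w" using cj_self[OF sc] by force
  qed
  have e: "N s \<inter> cj s ` N w = (if s \<in> N w then {s} else {})" using iff N_S[OF s] by auto
  have lm: "len (s \<otimes> w) + 2 * card (N s \<inter> cj s ` N w) = 1 + len w" using len_mult[OF sc w] len_S[OF s] by simp
  show ?thesis
  proof (cases "s \<in> N w")
    case True then show ?thesis using lm e by simp
  next
    case False then show ?thesis using lm e by simp
  qed
qed

lemma left_desc: "w \<in> carrier G \<Longrightarrow> s \<in> S \<Longrightarrow> len (s \<otimes> w) < len w \<longleftrightarrow> s \<in> N w"
  using left_len by fastforce

lemma right_len:
  assumes w: "w \<in> carrier G" and s: "s \<in> S"
  shows "(cj w s \<in> N w \<longrightarrow> len (w \<otimes> s) + 1 = len w) \<and> (cj w s \<notin> N w \<longrightarrow> len (w \<otimes> s) = len w + 1)"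
proof -
  have sc: "s \<in> carrier G" using s by simp
  have e: "N w \<inter> cj w ` N s = (if cj w s \<in> N w then {cj w s} else {})" using N_S[OF s] by auto
  have lm: "len (w \<otimes> s) + 2 * card (N w \<inter> cj w ` N s) = len w + 1" using len_mult[OF w sc] len_S[OF s] by simp
  show ?thesis
  proof (cases "cj w s \<in> N w")
    case True then show ?thesis using lm e by simp
  next
    case False then show ?thesis using lm e by simp
  qed
qed

lemma right_desc: "w \<in> carrier G \<Longrightarrow> s \<in> S \<Longrightarrow> len (w \<otimes> s) < len w \<longleftrightarrow> cj w s \<in> N w"
  using right_len by fastforce

lemma deletion:
  "set ws \<subseteq> S \<Longrightarrow> len (ev ws) < length ws \<Longrightarrow> \<exists>vs. set vs \<subseteq> set ws \<and> length vs < length ws \<and> ev vs = ev ws"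
proof (induction ws)
  case Nil then show ?case by simp
next
  case (Cons s vs)
  have s: "s \<in> S" and vsS: "set vs \<subseteq> S" using Cons.prems by auto
  show ?case
  proof (cases "len (ev vs) < length vs")
    case True
    then obtain us where us: "set us \<subseteq> set vs" "length us < length vs" "ev us = ev vs"
      using Cons.IH vsS by blast
    then show ?thesis by (intro exI[of _ "s # us"]) auto
  next
    case False
    then have eq: "len (ev vs) = length vs" using len_le[OF vsS] by simp
    have "len (s \<otimes> ev vs) < len (ev vs) + 1" using Cons.prems eq by simp
    then have "s \<in> N (ev vs)" using left_len[OF ev_cS[OF vsS] s] by auto
    then obtain i where i: "i < length vs" "s \<otimes> ev vs = ev (del i vs)"
      using N_exchange[OF vsS] by blast
    show ?thesis
      using i del_set[of i vs] del_length[OF i(1)] by (intro exI[of _ "del i vs"]) auto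
  qed
qed

lemma red_word:
  assumes P: "P \<subseteq> S" and w: "w \<in> generate G P"
  shows "\<exists>ws. set ws \<subseteq> P \<and> ev ws = w \<and> length ws = len w"
proof -
  obtain ws0 where "set ws0 \<subseteq> P" "ev ws0 = w" using gen_words w P by blast
  then have ex: "\<exists>n ws. set ws \<subseteq> P \<and> ev ws = w \<and> length ws = n" by blast
  define n0 where "n0 = (LEAST n. \<exists>ws. set ws \<subseteq> P \<and> ev ws = w \<and> length ws = n)"
  have "\<exists>ws. set ws \<subseteq> P \<and> ev ws = w \<and> length ws = n0"
    unfolding n0_def using LeastI_ex[OF ex] .
  then obtain ws where ws: "set ws \<subseteq> P" "ev ws = w" "length ws = n0" by blast
  have wsS: "set ws \<subseteq> S" using ws P by blast
  have "\<not> len w < length ws"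
  proof
    assume "len w < length ws"
    then obtain vs where vs: "set vs \<subseteq> set ws" "length vs < length ws" "ev vs = ev ws"
      using deletion[OF wsS] ws by auto
    have "set vs \<subseteq> P" using vs ws by blast
    then have "n0 \<le> length vs" unfolding n0_def using vs ws by (intro Least_le) auto
    then show False using vs ws by simp
  qed
  moreover have "len w \<le> length ws" using len_le[OF wsS] ws by simp
  ultimately show ?thesis using ws by (intro exI[of _ ws]) auto
qed

lemma len1_gen: "P \<subseteq> S \<Longrightarrow> w \<in> generate G P \<Longrightarrow> len w = 1 \<Longrightarrow> w \<in> P"
proof -
  assume P: "P \<subseteq> S" and w: "w \<in> generate G P" and l: "len w = 1"
  obtain ws where ws: "set ws \<subseteq> P" "ev ws = w" "length ws = 1" using red_word[OF P w] l by auto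
  then obtain x where "ws = [x]" by (metis One_nat_def length_0_conv length_Suc_conv)
  then show ?thesis using ws P by auto
qed

lemma S_in_gen: "P \<subseteq> S \<Longrightarrow> s \<in> S \<Longrightarrow> s \<in> generate G P \<Longrightarrow> s \<in> P"
  using len1_gen len_S by blast

lemma gen_c: "P \<subseteq> S \<Longrightarrow> w \<in> generate G P \<Longrightarrow> w \<in> carrier G"
  using gen_sub by blast

lemma gen_mult: "P \<subseteq> S \<Longrightarrow> a \<in> generate G P \<Longrightarrow> b \<in> generate G P \<Longrightarrow> a \<otimes> b \<in> generate G P"
  by (simp add: generate.eng)

lemma gen_inv: "P \<subseteq> S \<Longrightarrow> a \<in> generate G P \<Longrightarrow> inv a \<in> generate G P"
  using generate_m_inv_closed S_carrier by blast

lemma gen_S_incl: "P \<subseteq> S \<Longrightarrow> s \<in> P \<Longrightarrow> s \<in> generate G P"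
  by (simp add: generate.incl)

lemma cj_gen: "P \<subseteq> S \<Longrightarrow> a \<in> generate G P \<Longrightarrow> x \<in> generate G P \<Longrightarrow> cj a x \<in> generate G P"
proof -
  assume P: "P \<subseteq> S" and a: "a \<in> generate G P" and x: "x \<in> generate G P"
  have "a \<otimes> x \<in> generate G P" by (rule gen_mult[OF P a x])
  then show ?thesis unfolding cj_def by (rule gen_mult[OF P _ gen_inv[OF P a]])
qed

lemma N_gen:
  assumes P: "P \<subseteq> S" and w: "w \<in> generate G P" and r: "r \<in> N w"
  shows "r \<in> generate G P" "r \<noteq> \<one>"
proof -
  obtain ws where ws: "set ws \<subseteq> P" "ev ws = w" using gen_words w P by blast
  have wsS: "set ws \<subseteq> S" using ws P by blast
  have rin: "r \<in> set (rl ws)" using N_sub_rl[OF wsS] ws r by blast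
  then obtain i where i: "i < length ws" "r = rl ws ! i" by (auto simp: in_set_conv_nth)
  have "r = cj (ev (take i ws)) (ws ! i)" using rl_nth[of ws i] wsS S_carrier i by auto
  moreover have "ev (take i ws) \<in> generate G P"
    using words_gen[OF P] ws set_take_subset[of i ws] by blast
  moreover have "ws ! i \<in> generate G P" using ws(1) nth_mem[OF i(1)] gen_S_incl[OF P] by blast
  ultimately show "r \<in> generate G P" using cj_gen[OF P] by simp
  show "r \<noteq> \<one>" using rl_invol(2)[OF wsS rin] .
qed

lemma gen_inter_aux:
  "\<forall>w. len w = n \<longrightarrow> P \<subseteq> S \<longrightarrow> Q \<subseteq> S \<longrightarrow> w \<in> generate G P \<longrightarrow> w \<in> generate G Q \<longrightarrow> w \<in> generate G (P \<inter> Q)"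
proof (induction n rule: less_induct)
  case (less n)
  show ?case
  proof (intro allI impI)
    fix w assume n: "len w = n" and P: "P \<subseteq> S" and Q: "Q \<subseteq> S" and wP: "w \<in> generate G P" and wQ: "w \<in> generate G Q"
    have wc: "w \<in> carrier G" using gen_c P wP by blast
    show "w \<in> generate G (P \<inter> Q)"
    proof (cases "len w = 0")
      case True
      then have "w = \<one>" using len_zero wc by blast
      then show ?thesis by (simp add: generate.one)
    next
      case False
      obtain ws where ws: "set ws \<subseteq> P" "ev ws = w" "length ws = len w" using red_word[OF P wP] by blast
      then obtain x vs where xv: "ws = x # vs" using False by (cases ws) auto
      have xP: "x \<in> P" and vsP: "set vs \<subseteq> P" using ws xv by auto
      have xS: "x \<in> S" using xP P by blast
      have vsS: "set vs \<subseteq> S" using vsP P by blast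
      have we: "w = x \<otimes> ev vs" using ws xv by simp
      have xw: "x \<otimes> w = ev vs" unfolding we using xS vsS m_assoc[of x x "ev vs"] S_inv[OF xS] by simp
      have "len (x \<otimes> w) < len w" using xw len_le[OF vsS] ws xv by simp
      then have "x \<in> N w" using left_desc[OF wc xS] by simp
      then have "x \<in> generate G Q" using N_gen[OF Q wQ] by blast
      then have xQ: "x \<in> Q" using S_in_gen[OF Q xS] by blast
      have a1: "x \<otimes> w \<in> generate G P" using xw words_gen[OF P vsP] by simp
      have a2: "x \<otimes> w \<in> generate G Q" using gen_mult[OF Q] gen_S_incl[OF Q xQ] wQ by blast
      have "len (x \<otimes> w) < n" using \<open>len (x \<otimes> w) < len w\<close> n by simp
      then have "x \<otimes> w \<in> generate G (P \<inter> Q)" using less.IH a1 a2 P Q by blast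
      moreover have "x \<in> generate G (P \<inter> Q)" using xP xQ by (simp add: generate.incl)
      ultimately have "x \<otimes> (x \<otimes> w) \<in> generate G (P \<inter> Q)" by (simp add: generate.eng)
      moreover have "x \<otimes> (x \<otimes> w) = w" using xS wc by (simp add: m_assoc[symmetric] S_inv)
      ultimately show ?thesis by simp
    qed
  qed
qed

lemma gen_inter: "P \<subseteq> S \<Longrightarrow> Q \<subseteq> S \<Longrightarrow> w \<in> generate G P \<Longrightarrow> w \<in> generate G Q \<Longrightarrow> w \<in> generate G (P \<inter> Q)"
  using gen_inter_aux by blast

lemma gen_empty: "w \<in> generate G {} \<Longrightarrow> w = \<one>"
  using gen_words[of w "{}"] by auto

lemma gen_disj: "P \<subseteq> S \<Longrightarrow> Q \<subseteq> S \<Longrightarrow> P \<inter> Q = {} \<Longrightarrow> w \<in> generate G P \<Longrightarrow> w \<in> generate G Q \<Longrightarrow> w = \<one>"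
  using gen_inter gen_empty by metis

lemma gen_single: "t \<in> S \<Longrightarrow> w \<in> generate G {t} \<Longrightarrow> w = \<one> \<or> w = t"
proof -
  assume t: "t \<in> S" and w: "w \<in> generate G {t}"
  obtain ws where ws: "set ws \<subseteq> {t}" "ev ws = w" using gen_words[of w "{t}"] w t by auto
  have "set ws \<subseteq> {t} \<Longrightarrow> ev ws = \<one> \<or> ev ws = t" for ws
  proof (induction ws)
    case Nil then show ?case by simp
  next
    case (Cons x ws) then show ?case using t S_inv[of t] by auto
  qed
  then show ?thesis using ws by blast
qed

lemma len_add_disj:
  assumes P: "P \<subseteq> S" and Q: "Q \<subseteq> S" and d: "P \<inter> Q = {}"
    and x: "x \<in> generate G P" and y: "y \<in> generate G Q"
  shows "len (x \<otimes> y) = len x + len y"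
proof -
  have xc: "x \<in> carrier G" and yc: "y \<in> carrier G" using gen_c P Q x y by blast+
  have "N x \<inter> cj x ` N y = {}"
  proof (rule ccontr)
    assume "N x \<inter> cj x ` N y \<noteq> {}"
    then obtain r u where r: "r \<in> N x" and u: "u \<in> N y" and ru: "r = cj x u" by blast
    have rP: "r \<in> generate G P" using N_gen[OF P x r] by blast
    have uQ: "u \<in> generate G Q" and u1: "u \<noteq> \<one>" using N_gen[OF Q y u] by blast+
    have uc: "u \<in> carrier G" using gen_c Q uQ by blast
    have "u = cj (inv x) r" using ru xc uc by simp
    then have "u \<in> generate G P" using cj_gen[OF P] gen_inv[OF P x] rP by simp
    then show False using gen_disj[OF P Q d _ uQ] u1 by blast
  qed
  then show ?thesis using len_add_iff[OF xc yc] by simp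
qed


lemma cj_c_gen: "P \<subseteq> S \<Longrightarrow> a \<in> carrier G \<Longrightarrow> cj a x \<in> generate G P \<Longrightarrow> x \<in> carrier G \<Longrightarrow> x = cj (inv a) (cj a x)"
  by simp

lemma cj_eq_mult: "a \<in> carrier G \<Longrightarrow> x \<in> carrier G \<Longrightarrow> cj a x \<otimes> a = a \<otimes> x"
  by (simp add: cj_def m_assoc)

lemma N_sd_mem: "x \<in> sd A B \<longleftrightarrow> (x \<in> A) \<noteq> (x \<in> B)"
  unfolding sd_def by auto

lemma notin_gen_cj:
  assumes P: "P \<subseteq> S" and a: "a \<in> generate G P" and x: "x \<in> carrier G" and nx: "x \<notin> generate G P"
  shows "cj a x \<notin> generate G P"
proof
  assume h: "cj a x \<in> generate G P"
  have ac: "a \<in> carrier G" using gen_c[OF P a] .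
  have "x = cj (inv a) (cj a x)" using ac x by simp
  then have "x \<in> generate G P" using cj_gen[OF P gen_inv[OF P a] h] by simp
  then show False using nx by simp
qed

lemma S_notin_gen: "P \<subseteq> S \<Longrightarrow> s \<in> S \<Longrightarrow> s \<notin> P \<Longrightarrow> s \<notin> generate G P"
  using S_in_gen by blast

lemma K_lemma:
  assumes C: "C \<subseteq> S" and g: "g \<in> generate G C" and w: "w \<in> carrier G" and s: "s \<in> S"
    and nc: "cj w s \<notin> generate G C"
  shows "cj (g \<otimes> w) s \<in> N (g \<otimes> w) \<longleftrightarrow> cj w s \<in> N w"
proof -
  have gc: "g \<in> carrier G" using gen_c[OF C g] .
  define p where "p = cj w s"
  have pc: "p \<in> carrier G" using w s by (simp add: p_def)
  have e: "cj (g \<otimes> w) s = cj g p" using gc w s by (simp add: cj_mult p_def)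
  have n1: "cj g p \<notin> N g"
  proof
    assume "cj g p \<in> N g"
    then have "cj g p \<in> generate G C" using N_gen[OF C g] by blast
    then show False using notin_gen_cj[OF C g pc] nc by (simp add: p_def)
  qed
  have n2: "cj g p \<in> cj g ` N w \<longleftrightarrow> p \<in> N w"
    using inj_onD[OF cj_inj[OF gc]] N_c[OF w] pc by blast
  show ?thesis using N_mult[OF gc w] e n1 n2 by (simp add: N_sd_mem p_def)
qed

lemma LL_lemma:
  assumes B: "B \<subseteq> S" and C: "C \<subseteq> S" and d: "B \<inter> C = {}"
  shows "\<forall>h. len h = n \<longrightarrow> h \<in> generate G B \<longrightarrow> (\<forall>c\<in>C. \<forall>c'\<in>C. c \<otimes> h = h \<otimes> c' \<longrightarrow> c = c')"
proof (induction n rule: less_induct)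
  case (less n)
  show ?case
  proof (intro allI impI ballI)
    fix h c c' assume n: "len h = n" and h: "h \<in> generate G B" and c: "c \<in> C" and c': "c' \<in> C"
      and eq: "c \<otimes> h = h \<otimes> c'"
    have hc: "h \<in> carrier G" using gen_c[OF B h] .
    have cS: "c \<in> S" and c'S: "c' \<in> S" using c c' C by auto
    have cc: "c \<in> carrier G" and c'c: "c' \<in> carrier G" using cS c'S by auto
    have cC: "c \<in> generate G C" and c'C: "c' \<in> generate G C" using c c' by (auto simp: generate.incl)
    show "c = c'"
    proof (cases "len h = 0")
      case True
      then have "h = \<one>" using len_zero hc by blast
      then show ?thesis using eq cc c'c by simp
    next
      case False
      obtain ws where ws: "set ws \<subseteq> B" "ev ws = h" "length ws = len h" using red_word[OF B h] by blast
      then obtain b vs where bv: "ws = b # vs" using False by (cases ws) auto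
      have bB: "b \<in> B" and vsB: "set vs \<subseteq> B" using ws bv by auto
      have bS: "b \<in> S" using bB B by blast
      have bc: "b \<in> carrier G" using bS by simp
      have vsS: "set vs \<subseteq> S" using vsB B by blast
      have he: "h = b \<otimes> ev vs" using ws bv by simp
      have bh: "b \<otimes> h = ev vs" unfolding he using bS vsS m_assoc[of b b "ev vs"] S_inv[OF bS] by simp
      have lbh: "len (b \<otimes> h) < len h" using bh len_le[OF vsS] ws bv by simp
      then have bN: "b \<in> N h" using left_desc[OF hc bS] by simp
      have bgen: "b \<in> generate G B" using bB by (simp add: generate.incl)
      have cnotN: "c \<notin> N h"
      proof
        assume "c \<in> N h"
        then have "c \<in> generate G B" using N_gen[OF B h] by blast
        then show False using S_in_gen[OF B cS] c d by blast
      qed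
      have NcS: "N c = {c}" using N_S[OF cS] .
      have l1: "len (c \<otimes> h) = len c + len h" using len_add_disj[OF C B _ cC h] d by blast
      have l2: "len (h \<otimes> c') = len h + len c'" using len_add_disj[OF B C d h c'C] .
      have N1: "N (c \<otimes> h) = {c} \<union> cj c ` N h" using N_mult_disj[OF cc hc l1] NcS by simp
      have hc'h: "cj h c' = c"
      proof -
        have "cj h c' = h \<otimes> c' \<otimes> inv h" by (simp add: cj_def)
        also have "\<dots> = c \<otimes> h \<otimes> inv h" using eq by simp
        also have "\<dots> = c" using cc hc by (simp add: m_assoc)
        finally show ?thesis .
      qed
      have N2: "N (h \<otimes> c') = N h \<union> {c}" using N_mult_disj[OF hc c'c l2] N_S[OF c'S] hc'h by simp
      have cnotimg: "c \<notin> cj c ` N h"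
      proof
        assume "c \<in> cj c ` N h"
        then obtain r where r: "r \<in> N h" "c = cj c r" by blast
        have "r = cj c (cj c r)" using cj_S_S[OF cS] N_c[OF hc] r(1) by auto
        then have "r = c" using r(2) cj_self[OF cc] by simp
        then show False using r(1) cnotN by simp
      qed
      have un: "{c} \<union> cj c ` N h = N h \<union> {c}" using N1 N2 eq by simp
      have img: "cj c ` N h = N h"
      proof (intro equalityI subsetI)
        fix r assume r: "r \<in> cj c ` N h"
        then have "r \<noteq> c" using cnotimg by blast
        then show "r \<in> N h" using un r by blast
      next
        fix r assume r: "r \<in> N h"
        then have "r \<noteq> c" using cnotN by blast
        then show "r \<in> cj c ` N h" using un r by blast
      qed
      have cbN: "cj c b \<in> N h" using img bN by blast
      define y where "y = cj c b"
      have yB: "y \<in> generate G B" using N_gen[OF B h] cbN by (simp add: y_def)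
      have yc: "y \<in> carrier G" using gen_c[OF B yB] .
      have bcy: "b \<otimes> c = c \<otimes> y"
        unfolding y_def cj_def using bc cc cS m_assoc[of c c "b \<otimes> inv c"] S_inv[OF cS] by (simp add: m_assoc)
      have lbc: "len (b \<otimes> c) = 2" using len_add_disj[OF B C d bgen cC] len_S bS cS by simp
      have lcy: "len (c \<otimes> y) = 1 + len y" using len_add_disj[OF C B _ cC yB] d len_S[OF cS] by fastforce
      have ly: "len y = 1" using lbc lcy bcy by simp
      have "c \<otimes> (b \<otimes> c) = y" using bcy cc yc cS m_assoc[of c c y] S_inv[OF cS] by simp
      then have "len (c \<otimes> (b \<otimes> c)) < len (b \<otimes> c)" using ly lbc by simp
      then have "c \<in> N (b \<otimes> c)" using left_desc[of "b \<otimes> c" c] bc cc cS by simp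
      moreover have "N (b \<otimes> c) = sd {b} {cj b c}" using N_mult[OF bc cc] N_S[OF bS] N_S[OF cS] by simp
      moreover have "c \<noteq> b" using c bB d by blast
      ultimately have "c = cj b c" by (auto simp: N_sd_mem)
      then have comm: "c \<otimes> b = b \<otimes> c"
        unfolding cj_def using bc cc bS m_assoc[of "b \<otimes> c" b b] S_inv[OF bS] by (simp add: m_assoc)
      define h1 where "h1 = b \<otimes> h"
      have h1B: "h1 \<in> generate G B" unfolding h1_def using gen_mult[OF B bgen h] .
      have lh1: "len h1 < n" using lbh n by (simp add: h1_def)
      have "c \<otimes> h1 = h1 \<otimes> c'"
      proof -
        have "c \<otimes> h1 = (c \<otimes> b) \<otimes> h" using cc bc hc by (simp add: h1_def m_assoc)
        also have "\<dots> = b \<otimes> (c \<otimes> h)" using comm cc bc hc by (simp add: m_assoc)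
        also have "\<dots> = h1 \<otimes> c'" using eq bc hc c'c by (simp add: h1_def m_assoc)
        finally show ?thesis .
      qed
      then show ?thesis using less.IH[OF lh1] h1B c c' by blast
    qed
  qed
qed

lemma LL:
  assumes "B \<subseteq> S" "C \<subseteq> S" "B \<inter> C = {}" "h \<in> generate G B" "c \<in> C" "c' \<in> C" "c \<otimes> h = h \<otimes> c'"
  shows "c = c'"
  using LL_lemma[OF assms(1-3), of "len h"] assms(4-7) by blast


lemma card_eq_sub:
  assumes f: "finite A" and sub: "A \<subseteq> h ` A" and inj: "inj_on h A"
  shows "h ` A = A"
proof -
  have "card (h ` A) = card A" using card_image[OF inj] .
  moreover have "finite (h ` A)" using f by simp
  ultimately show ?thesis using card_subset_eq[of "h ` A" A] sub by simp
qed

lemma Q_lemma: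
  assumes B: "B \<subseteq> S" and C: "C \<subseteq> S" and d: "B \<inter> C = {}"
  shows "\<forall>g. len g = n \<longrightarrow> g \<in> generate G C \<longrightarrow> (\<forall>x\<in>generate G B. \<forall>p\<in>generate G B. x \<otimes> g = g \<otimes> p \<longrightarrow> x = p)"
proof (induction n rule: less_induct)
  case (less n)
  show ?case
  proof (intro allI impI ballI)
    fix g x p assume n: "len g = n" and g: "g \<in> generate G C" and x: "x \<in> generate G B"
      and p: "p \<in> generate G B" and eq: "x \<otimes> g = g \<otimes> p"
    have gc: "g \<in> carrier G" using gen_c[OF C g] .
    have xc: "x \<in> carrier G" using gen_c[OF B x] .
    have pc: "p \<in> carrier G" using gen_c[OF B p] .
    have dC: "C \<inter> B = {}" using d by blast
    show "x = p"
    proof (cases "len g = 0")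
      case True
      then have "g = \<one>" using len_zero gc by blast
      then show ?thesis using eq xc pc by simp
    next
      case False
      obtain ws where ws: "set ws \<subseteq> C" "ev ws = g" "length ws = len g" using red_word[OF C g] by blast
      then obtain c vs where cv: "ws = c # vs" using False by (cases ws) auto
      have cC: "c \<in> C" and vsC: "set vs \<subseteq> C" using ws cv by auto
      have cS: "c \<in> S" using cC C by blast
      have cc: "c \<in> carrier G" using cS by simp
      have vsS: "set vs \<subseteq> S" using vsC C by blast
      have ge: "g = c \<otimes> ev vs" using ws cv by simp
      have cg: "c \<otimes> g = ev vs" unfolding ge using cS vsS m_assoc[of c c "ev vs"] S_inv[OF cS] by simp
      have lcg: "len (c \<otimes> g) < len g" using cg len_le[OF vsS] ws cv by simp
      then have cN: "c \<in> N g" using left_desc[OF gc cS] by simp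
      have cgen: "c \<in> generate G C" using cC by (simp add: generate.incl)
      have l1: "len (x \<otimes> g) = len x + len g" using len_add_disj[OF B C d x g] .
      have l2: "len (g \<otimes> p) = len g + len p" using len_add_disj[OF C B dC g p] .
      have N1: "N (x \<otimes> g) = N x \<union> cj x ` N g" using N_mult_disj[OF xc gc l1] .
      have N2: "N (g \<otimes> p) = N g \<union> cj g ` N p" using N_mult_disj[OF gc pc l2] .
      have sub: "N g \<subseteq> cj x ` N g"
      proof
        fix r assume r: "r \<in> N g"
        have "N x \<union> cj x ` N g = N g \<union> cj g ` N p" using N1 N2 eq by simp
        then have "r \<in> N x \<union> cj x ` N g" using r by blast
        moreover have "r \<notin> N x"
        proof
          assume "r \<in> N x"
          then have "r \<in> generate G B" using N_gen[OF B x] by blast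
          moreover have "r \<in> generate G C" "r \<noteq> \<one>" using N_gen[OF C g r] by blast+
          ultimately show False using gen_disj[OF B C d] by blast
        qed
        ultimately show "r \<in> cj x ` N g" by blast
      qed
      have img: "cj x ` N g = N g"
        using card_eq_sub[OF N_finite[OF gc] sub inj_on_subset[OF cj_inj[OF xc] N_c[OF gc]]] .
      then obtain r where r: "r \<in> N g" "c = cj x r" using cN by (metis imageE)
      have rC: "r \<in> generate G C" using N_gen[OF C g r(1)] by blast
      have rc: "r \<in> carrier G" using gen_c[OF C rC] .
      have cx: "c \<otimes> x = x \<otimes> r" using r(2) cj_eq_mult[OF xc rc] by simp
      have lcx: "len (c \<otimes> x) = len c + len x" using len_add_disj[OF C B dC cgen x] .
      have lxr: "len (x \<otimes> r) = len x + len r" using len_add_disj[OF B C d x rC] .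
      have "len r = 1" using lcx lxr cx len_S[OF cS] by simp
      then have rCC: "r \<in> C" using len1_gen[OF C rC] by blast
      have "c = r" using LL[OF B C d x cC rCC cx] .
      then have comm: "c \<otimes> x = x \<otimes> c" using cx by simp
      define g1 where "g1 = c \<otimes> g"
      have g1C: "g1 \<in> generate G C" unfolding g1_def using gen_mult[OF C cgen g] .
      have lg1: "len g1 < n" using lcg n by (simp add: g1_def)
      have "x \<otimes> g1 = g1 \<otimes> p"
      proof -
        have "x \<otimes> g1 = (x \<otimes> c) \<otimes> g" using cc xc gc by (simp add: g1_def m_assoc)
        also have "\<dots> = (c \<otimes> x) \<otimes> g" using comm by simp
        also have "\<dots> = c \<otimes> (x \<otimes> g)" using cc xc gc by (simp add: m_assoc)
        also have "\<dots> = g1 \<otimes> p" using eq cc gc pc by (simp add: g1_def m_assoc)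
        finally show ?thesis .
      qed
      then show ?thesis using less.IH[OF lg1] g1C x p by blast
    qed
  qed
qed

lemma Q:
  assumes "B \<subseteq> S" "C \<subseteq> S" "B \<inter> C = {}" "g \<in> generate G C" "x \<in> generate G B" "p \<in> generate G B"
    "x \<otimes> g = g \<otimes> p"
  shows "x = p"
  using Q_lemma[OF assms(1-3), of "len g"] assms(4-7) by blast


lemma M_A:
  assumes B: "B \<subseteq> S" and C: "C \<subseteq> S" and d: "B \<inter> C = {}" and t: "t \<in> B"
    and f: "f \<in> generate G B" and nt: "cj f t \<notin> N f" and q: "q \<in> generate G (insert t C)"
  shows "len (f \<otimes> q) = len f + len q"
proof -
  have tS: "t \<in> S" using t B by blast
  have I: "insert t C \<subseteq> S" using tS C by blast
  have fc: "f \<in> carrier G" using gen_c[OF B f] .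
  have qc: "q \<in> carrier G" using gen_c[OF I q] .
  have BI: "B \<inter> insert t C = {t}" using t d by blast
  have "N f \<inter> cj f ` N q = {}"
  proof (rule ccontr)
    assume "N f \<inter> cj f ` N q \<noteq> {}"
    then obtain r u where r: "r \<in> N f" and u: "u \<in> N q" and ru: "r = cj f u" by blast
    have uI: "u \<in> generate G (insert t C)" and u1: "u \<noteq> \<one>" using N_gen[OF I q u] by blast+
    have uc: "u \<in> carrier G" using gen_c[OF I uI] .
    have rB: "r \<in> generate G B" using N_gen[OF B f r] by blast
    have "u = cj (inv f) r" using ru fc uc by simp
    then have uB: "u \<in> generate G B" using cj_gen[OF B gen_inv[OF B f] rB] by simp
    have "u \<in> generate G {t}" using gen_inter[OF B I uB uI] BI by simp
    then have "u = t" using gen_single[OF tS] u1 by blast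
    then show False using r ru nt by simp
  qed
  then show ?thesis using len_add_iff[OF fc qc] by simp
qed

lemma M_aux:
  assumes B: "B \<subseteq> S" and C: "C \<subseteq> S" and d: "B \<inter> C = {}" and t: "t \<in> B"
    and f: "f \<in> generate G B" and nt: "cj f t \<notin> N f"
  shows "\<forall>q. len q = n \<longrightarrow> q \<in> generate G (insert t C) \<longrightarrow> cj f q \<in> generate G C \<longrightarrow> q \<in> generate G C"
proof (induction n rule: less_induct)
  case (less n)
  have tS: "t \<in> S" using t B by blast
  have I: "insert t C \<subseteq> S" using tS C by blast
  have fc: "f \<in> carrier G" using gen_c[OF B f] .
  have dC: "C \<inter> B = {}" using d by blast
  show ?case
  proof (intro allI impI)
    fix q assume n: "len q = n" and q: "q \<in> generate G (insert t C)" and zC: "cj f q \<in> generate G C"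
    have qc: "q \<in> carrier G" using gen_c[OF I q] .
    show "q \<in> generate G C"
    proof (cases "len q = 0")
      case True
      then have "q = \<one>" using len_zero qc by blast
      then show ?thesis by (simp add: generate.one)
    next
      case False
      define z where "z = cj f q"
      have zc: "z \<in> carrier G" using fc qc by (simp add: z_def)
      have zC': "z \<in> generate G C" using zC by (simp add: z_def)
      have eq: "z \<otimes> f = f \<otimes> q" using cj_eq_mult[OF fc qc] by (simp add: z_def)
      have lz: "len (z \<otimes> f) = len z + len f" using len_add_disj[OF C B dC zC' f] .
      have lq: "len (f \<otimes> q) = len f + len q" using M_A[OF B C d t f nt q] .
      have N1: "N (z \<otimes> f) = N z \<union> cj z ` N f" using N_mult_disj[OF zc fc lz] .
      have N2: "N (f \<otimes> q) = N f \<union> cj f ` N q" using N_mult_disj[OF fc qc lq] .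
      have dfq: "N f \<inter> cj f ` N q = {}" using len_add_iff[OF fc qc] lq by simp
      have un: "N z \<union> cj z ` N f = N f \<union> cj f ` N q" using N1 N2 eq by simp
      have nzf: "r \<in> N z \<Longrightarrow> r \<notin> N f" for r
      proof
        assume rz: "r \<in> N z" and rf: "r \<in> N f"
        have "r \<in> generate G C" "r \<noteq> \<one>" using N_gen[OF C zC' rz] by blast+
        moreover have "r \<in> generate G B" using N_gen[OF B f rf] by blast
        ultimately show False using gen_disj[OF B C d] by blast
      qed
      have sub: "N f \<subseteq> cj z ` N f"
      proof
        fix r assume r: "r \<in> N f"
        then have "r \<in> N z \<union> cj z ` N f" using un by blast
        then show "r \<in> cj z ` N f" using nzf r by blast
      qed
      have img: "cj z ` N f = N f"
        using card_eq_sub[OF N_finite[OF fc] sub inj_on_subset[OF cj_inj[OF zc] N_c[OF fc]]] .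
      have Nz: "N z = cj f ` N q"
      proof (intro equalityI subsetI)
        fix r assume r: "r \<in> N z"
        then have "r \<notin> N f" using nzf by blast
        then show "r \<in> cj f ` N q" using un r by blast
      next
        fix r assume r: "r \<in> cj f ` N q"
        then have "r \<notin> N f" using dfq by blast
        then show "r \<in> N z" using un r img by blast
      qed
      obtain ws where ws: "set ws \<subseteq> insert t C" "ev ws = q" "length ws = len q" using red_word[OF I q] by blast
      then obtain s1 vs where sv: "ws = s1 # vs" using False by (cases ws) auto
      have s1I: "s1 \<in> insert t C" and vsI: "set vs \<subseteq> insert t C" using ws sv by auto
      have s1S: "s1 \<in> S" using s1I I by blast
      have s1c: "s1 \<in> carrier G" using s1S by simp
      have vsS: "set vs \<subseteq> S" using vsI I by blast
      have qe: "q = s1 \<otimes> ev vs" using ws sv by simp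
      have sq: "s1 \<otimes> q = ev vs" unfolding qe using s1S vsS m_assoc[of s1 s1 "ev vs"] S_inv[OF s1S] by simp
      have lsq: "len (s1 \<otimes> q) < len q" using sq len_le[OF vsS] ws sv by simp
      then have s1N: "s1 \<in> N q" using left_desc[OF qc s1S] by simp
      then have fs1: "cj f s1 \<in> N z" using Nz by blast
      then have fs1C: "cj f s1 \<in> generate G C" using N_gen[OF C zC'] by blast
      have s1C: "s1 \<in> C"
      proof (rule ccontr)
        assume "s1 \<notin> C"
        then have st: "s1 = t" using s1I by blast
        have "cj f t \<in> generate G B" using cj_gen[OF B f] t by (simp add: generate.incl)
        then have "cj f t = \<one>" using gen_disj[OF B C d] fs1C st by blast
        then have "t = cj (inv f) \<one>" using cj_inv_cancel[OF fc, of t] tS by simp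
        also have "\<dots> = \<one>" using fc by (simp add: cj_def)
        finally show False using tS one_notin_S by simp
      qed
      define q1 where "q1 = s1 \<otimes> q"
      have q1I: "q1 \<in> generate G (insert t C)"
        unfolding q1_def using gen_mult[OF I _ q] s1I by (simp add: generate.incl)
      have lq1: "len q1 < n" using lsq n by (simp add: q1_def)
      have "cj f q1 = cj f s1 \<otimes> cj f q" using cj_prod[OF fc s1c qc] by (simp add: q1_def)
      then have "cj f q1 \<in> generate G C" using gen_mult[OF C fs1C zC] by simp
      then have q1C: "q1 \<in> generate G C" using less.IH[OF lq1] q1I by blast
      have "q = s1 \<otimes> q1" using s1S qc m_assoc[of s1 s1 q] S_inv[OF s1S] by (simp add: q1_def)
      then show ?thesis using gen_mult[OF C _ q1C] s1C by (simp add: generate.incl)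
    qed
  qed
qed

lemma M:
  assumes B: "B \<subseteq> S" and C: "C \<subseteq> S" and d: "B \<inter> C = {}" and t: "t \<in> B"
    and f: "f \<in> generate G B" and nt: "cj f t \<notin> N f" and g': "g' \<in> generate G C"
  shows "cj (f \<otimes> g') t \<notin> generate G C"
proof
  assume h: "cj (f \<otimes> g') t \<in> generate G C"
  have tS: "t \<in> S" using t B by blast
  have I: "insert t C \<subseteq> S" using tS C by blast
  have fc: "f \<in> carrier G" using gen_c[OF B f] .
  have gc: "g' \<in> carrier G" using gen_c[OF C g'] .
  have gI: "g' \<in> generate G (insert t C)" using mono_generate[of C "insert t C"] g' by blast
  have tI: "t \<in> generate G (insert t C)" by (simp add: generate.incl)
  define q where "q = cj g' t"
  have qI: "q \<in> generate G (insert t C)" unfolding q_def using cj_gen[OF I gI tI] .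
  have qc: "q \<in> carrier G" using gen_c[OF I qI] .
  have "cj f q = cj (f \<otimes> g') t" using cj_mult[OF fc gc] tS by (simp add: q_def)
  then have "q \<in> generate G C" using M_aux[OF B C d t f nt, of "len q"] qI h by auto
  then have "cj (inv g') q \<in> generate G C" using cj_gen[OF C gen_inv[OF C g']] by blast
  then have "t \<in> generate G C" using gc tS by (simp add: q_def)
  then have "t \<in> C" using S_in_gen[OF C tS] by blast
  then show False using t d by blast
qed


lemma desc_iff: "w \<in> carrier G \<Longrightarrow> s \<in> right_descents G S w \<longleftrightarrow> s \<in> S \<and> cj w s \<in> N w"
  unfolding right_descents_def using right_desc by auto

lemma comm_gen:
  assumes C: "C \<subseteq> S" and sc: "s \<in> carrier G" and cm: "\<forall>c\<in>C. s \<otimes> c = c \<otimes> s" and w: "w \<in> generate G C"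
  shows "s \<otimes> w = w \<otimes> s"
  using w
proof (induction rule: generate.induct)
  case one then show ?case using sc by simp
next
  case (incl h) then show ?case using cm by simp
next
  case (inv h)
  then have "inv h = h" using C by auto
  then show ?case using cm inv by simp
next
  case (eng a b)
  have ac: "a \<in> carrier G" and bc: "b \<in> carrier G" using gen_c[OF C] eng.hyps by auto
  have "s \<otimes> (a \<otimes> b) = (s \<otimes> a) \<otimes> b" using sc ac bc by (simp add: m_assoc)
  also have "\<dots> = (a \<otimes> s) \<otimes> b" using eng.IH by simp
  also have "\<dots> = a \<otimes> (s \<otimes> b)" using sc ac bc by (simp add: m_assoc)
  also have "\<dots> = a \<otimes> (b \<otimes> s)" using eng.IH by simp
  also have "\<dots> = (a \<otimes> b) \<otimes> s" using sc ac bc by (simp add: m_assoc)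
  finally show ?case .
qed

lemma cj_ne_one: "a \<in> carrier G \<Longrightarrow> s \<in> S \<Longrightarrow> cj a s \<noteq> \<one>"
proof
  assume a: "a \<in> carrier G" and s: "s \<in> S" and h: "cj a s = \<one>"
  have "s = cj (inv a) (cj a s)" using a s by simp
  also have "\<dots> = \<one>" using h a by (simp add: cj_def)
  finally show False using s one_notin_S by simp
qed

lemma claim2:
  assumes B: "B \<subseteq> S" and C: "C \<subseteq> S" and d: "B \<inter> C = {}" and t: "t \<in> B"
    and f: "f \<in> generate G B" and g: "g \<in> generate G C" and nt: "cj f t \<notin> N f"
  shows "cj (f \<otimes> g) t \<notin> N (f \<otimes> g)"
proof
  assume h: "cj (f \<otimes> g) t \<in> N (f \<otimes> g)"
  have tS: "t \<in> S" using t B by blast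
  have fc: "f \<in> carrier G" using gen_c[OF B f] .
  have gc: "g \<in> carrier G" using gen_c[OF C g] .
  define q where "q = cj g t"
  have qc: "q \<in> carrier G" using gc tS by (simp add: q_def)
  have e: "cj (f \<otimes> g) t = cj f q" using cj_mult[OF fc gc] tS by (simp add: q_def)
  have tnC: "t \<notin> generate G C" using S_notin_gen[OF C tS] t d by blast
  have n1: "cj f q \<notin> cj f ` N g"
  proof
    assume "cj f q \<in> cj f ` N g"
    then have "q \<in> N g" using inj_onD[OF cj_inj[OF fc]] N_c[OF gc] qc by blast
    then have "q \<in> generate G C" using N_gen[OF C g] by blast
    then show False using notin_gen_cj[OF C g _ tnC] tS by (simp add: q_def)
  qed
  then have "cj f q \<in> N f" using h e N_mult[OF fc gc] by (simp add: N_sd_mem)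
  then have "cj f q \<in> generate G B" using N_gen[OF B f] by blast
  then have "cj (inv f) (cj f q) \<in> generate G B" using cj_gen[OF B gen_inv[OF B f]] by blast
  then have qB: "q \<in> generate G B" using fc qc by simp
  have "q \<otimes> g = g \<otimes> t" using cj_eq_mult[OF gc] tS by (simp add: q_def)
  then have "q = t" using Q[OF B C d g qB _] t by (simp add: generate.incl)
  then show False using \<open>cj f q \<in> N f\<close> nt by simp
qed

lemma claim5:
  assumes B: "B \<subseteq> S" and C: "C \<subseteq> S" and d: "B \<inter> C = {}" and t: "t \<in> B"
    and f: "f \<in> generate G B" and f': "f' \<in> generate G B" and g: "g \<in> generate G C"
    and l: "len (f \<otimes> f') = len f + len f'" and tf': "cj f' t \<in> N f'"
  shows "cj (f \<otimes> g \<otimes> f') t \<in> N (f \<otimes> g \<otimes> f')"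
proof -
  have tS: "t \<in> S" using t B by blast
  have fc: "f \<in> carrier G" using gen_c[OF B f] .
  have f'c: "f' \<in> carrier G" using gen_c[OF B f'] .
  have gc: "g \<in> carrier G" using gen_c[OF C g] .
  define w where "w = f \<otimes> g"
  have wc: "w \<in> carrier G" using fc gc by (simp add: w_def)
  define p where "p = cj f' t"
  have pN: "p \<in> N f'" using tf' by (simp add: p_def)
  have pB: "p \<in> generate G B" and p1: "p \<noteq> \<one>" using N_gen[OF B f' pN] by blast+
  have pc: "p \<in> carrier G" using gen_c[OF B pB] .
  define q where "q = cj g p"
  have qc: "q \<in> carrier G" using gc pc by (simp add: q_def)
  have e1: "cj (w \<otimes> f') t = cj w p" using cj_mult[OF wc f'c] tS by (simp add: p_def)
  have e2: "cj w p = cj f q" using cj_mult[OF fc gc pc] by (simp add: w_def q_def)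
  have n1: "cj f q \<notin> cj f ` N g"
  proof
    assume "cj f q \<in> cj f ` N g"
    then have "q \<in> N g" using inj_onD[OF cj_inj[OF fc]] N_c[OF gc] qc by blast
    then have "q \<in> generate G C" using N_gen[OF C g] by blast
    then have "cj (inv g) q \<in> generate G C" using cj_gen[OF C gen_inv[OF C g]] by blast
    then have "p \<in> generate G C" using gc pc by (simp add: q_def)
    then show False using gen_disj[OF B C d pB] p1 by blast
  qed
  have n2: "cj f q \<notin> N f"
  proof
    assume h: "cj f q \<in> N f"
    then have "cj f q \<in> generate G B" using N_gen[OF B f] by blast
    then have "cj (inv f) (cj f q) \<in> generate G B" using cj_gen[OF B gen_inv[OF B f]] by blast
    then have qB: "q \<in> generate G B" using fc qc by simp
    have "q \<otimes> g = g \<otimes> p" using cj_eq_mult[OF gc pc] by (simp add: q_def)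
    then have "q = p" using Q[OF B C d g qB pB] by simp
    then have "cj f p \<in> N f" using h by simp
    moreover have "cj f p \<in> cj f ` N f'" using pN by blast
    moreover have "N f \<inter> cj f ` N f' = {}" using len_add_iff[OF fc f'c] l by simp
    ultimately show False by blast
  qed
  have "cj w p \<notin> N w" using e2 n1 n2 N_mult[OF fc gc] by (simp add: N_sd_mem w_def)
  moreover have "cj w p \<in> cj w ` N f'" using pN by blast
  ultimately have "cj w p \<in> N (w \<otimes> f')" using N_mult[OF wc f'c] by (simp add: N_sd_mem)
  then show ?thesis using e1 by (simp add: w_def)
qed

lemma main_loc:
  assumes part: "S = B \<union> C" "B \<inter> C = {}"
    and f: "f \<in> generate G B" and f': "f' \<in> generate G B"
    and g: "g \<in> generate G C" and g': "g' \<in> generate G C"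
  shows "cox_length G S (f \<otimes> g) = cox_length G S f + cox_length G S g
       \<and> cox_length G S (g \<otimes> f) = cox_length G S f + cox_length G S g
       \<and> (\<forall>s\<in>B. (\<forall>c\<in>C. s \<otimes> c = c \<otimes> s) \<longrightarrow>
             (s \<in> right_descents G S f \<longleftrightarrow>
              s \<in> right_descents G S (g \<otimes> f \<otimes> g')))
       \<and> (\<forall>t\<in>B.
             (t \<notin> right_descents G S f \<longrightarrow> t \<notin> right_descents G S (f \<otimes> g))
           \<and> (t \<in> right_descents G S f \<longleftrightarrow> t \<in> right_descents G S (g \<otimes> f))
           \<and> (t \<notin> right_descents G S f \<longrightarrow>
                t \<notin> right_descents G S (g \<otimes> f \<otimes> g'))
           \<and> (cox_length G S (f \<otimes> f') = cox_length G S f + cox_length G S f' \<longrightarrow>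
                t \<in> right_descents G S f' \<longrightarrow>
                t \<in> right_descents G S (f \<otimes> g \<otimes> f')))"
proof -
  have B: "B \<subseteq> S" and C: "C \<subseteq> S" and d: "B \<inter> C = {}" using part by auto
  have dC: "C \<inter> B = {}" using d by blast
  have fc: "f \<in> carrier G" using gen_c[OF B f] .
  have f'c: "f' \<in> carrier G" using gen_c[OF B f'] .
  have gc: "g \<in> carrier G" using gen_c[OF C g] .
  have g'c: "g' \<in> carrier G" using gen_c[OF C g'] .
  have c0a: "len (f \<otimes> g) = len f + len g" using len_add_disj[OF B C d f g] .
  have c0b: "len (g \<otimes> f) = len f + len g" using len_add_disj[OF C B dC g f] by simp
  have notC: "x \<in> generate G B \<Longrightarrow> x \<noteq> \<one> \<Longrightarrow> x \<notin> generate G C" for x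
    using gen_disj[OF B C d] by blast
  have cjfB: "u \<in> B \<Longrightarrow> cj f u \<notin> generate G C" for u
  proof -
    assume u: "u \<in> B"
    have uS: "u \<in> S" using u B by blast
    have "cj f u \<in> generate G B" using cj_gen[OF B f] u by (simp add: generate.incl)
    moreover have "cj f u \<noteq> \<one>" using cj_ne_one[OF fc uS] .
    ultimately show ?thesis using notC by blast
  qed
  have c1: "\<forall>s\<in>B. (\<forall>c\<in>C. s \<otimes> c = c \<otimes> s) \<longrightarrow>
             (s \<in> right_descents G S f \<longleftrightarrow> s \<in> right_descents G S (g \<otimes> f \<otimes> g'))"
  proof (intro ballI impI)
    fix s assume sB: "s \<in> B" and cm: "\<forall>c\<in>C. s \<otimes> c = c \<otimes> s"
    have sS: "s \<in> S" using sB B by blast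
    have sc: "s \<in> carrier G" using sS by simp
    have sg': "s \<otimes> g' = g' \<otimes> s" using comm_gen[OF C sc cm g'] .
    define w0 where "w0 = f \<otimes> g'"
    have w0c: "w0 \<in> carrier G" using fc g'c by (simp add: w0_def)
    have "cj g' s = (s \<otimes> g') \<otimes> inv g'" unfolding cj_def using sg' by simp
    also have "\<dots> = s" using g'c sc by (simp add: m_assoc)
    finally have cg's: "cj g' s = s" .
    have cw0: "cj w0 s = cj f s" using cj_mult[OF fc g'c sc] cg's by (simp add: w0_def)
    have K: "cj (g \<otimes> w0) s \<in> N (g \<otimes> w0) \<longleftrightarrow> cj w0 s \<in> N w0"
      using K_lemma[OF C g w0c sS] cw0 cjfB[OF sB] by simp
    have fsB: "f \<otimes> s \<in> generate G B" using gen_mult[OF B f] sB by (simp add: generate.incl)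
    have "w0 \<otimes> s = (f \<otimes> s) \<otimes> g'" using sg' fc g'c sc by (simp add: w0_def m_assoc)
    then have l1: "len (w0 \<otimes> s) = len (f \<otimes> s) + len g'" using len_add_disj[OF B C d fsB g'] by simp
    have l2: "len w0 = len f + len g'" using len_add_disj[OF B C d f g'] by (simp add: w0_def)
    have "cj w0 s \<in> N w0 \<longleftrightarrow> cj f s \<in> N f"
      using right_desc[OF w0c sS] right_desc[OF fc sS] l1 l2 by simp
    moreover have "g \<otimes> f \<otimes> g' = g \<otimes> w0" using gc fc g'c by (simp add: w0_def m_assoc)
    ultimately show "s \<in> right_descents G S f \<longleftrightarrow> s \<in> right_descents G S (g \<otimes> f \<otimes> g')"
      using K desc_iff fc gc w0c sS by simp
  qed
  have c2345: "\<forall>t\<in>B.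
             (t \<notin> right_descents G S f \<longrightarrow> t \<notin> right_descents G S (f \<otimes> g))
           \<and> (t \<in> right_descents G S f \<longleftrightarrow> t \<in> right_descents G S (g \<otimes> f))
           \<and> (t \<notin> right_descents G S f \<longrightarrow>
                t \<notin> right_descents G S (g \<otimes> f \<otimes> g'))
           \<and> (cox_length G S (f \<otimes> f') = cox_length G S f + cox_length G S f' \<longrightarrow>
                t \<in> right_descents G S f' \<longrightarrow>
                t \<in> right_descents G S (f \<otimes> g \<otimes> f'))"
  proof (intro ballI conjI impI)
    fix t assume t: "t \<in> B"
    have tS: "t \<in> S" using t B by blast
    {
      assume "t \<notin> right_descents G S f"
      then have "cj f t \<notin> N f" using desc_iff fc tS by simp
      then have "cj (f \<otimes> g) t \<notin> N (f \<otimes> g)" using claim2[OF B C d t f g] by simp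
      then show "t \<notin> right_descents G S (f \<otimes> g)" using desc_iff fc gc by simp
    }
    {
      have "cj (g \<otimes> f) t \<in> N (g \<otimes> f) \<longleftrightarrow> cj f t \<in> N f"
        using K_lemma[OF C g fc tS] cjfB[OF t] by simp
      then show "t \<in> right_descents G S f \<longleftrightarrow> t \<in> right_descents G S (g \<otimes> f)"
        using desc_iff fc gc tS by simp
    }
    {
      assume "t \<notin> right_descents G S f"
      then have nt: "cj f t \<notin> N f" using desc_iff fc tS by simp
      have w0c: "f \<otimes> g' \<in> carrier G" using fc g'c by simp
      have "cj (f \<otimes> g') t \<notin> generate G C" using M[OF B C d t f nt g'] .
      then have "cj (g \<otimes> (f \<otimes> g')) t \<in> N (g \<otimes> (f \<otimes> g')) \<longleftrightarrow> cj (f \<otimes> g') t \<in> N (f \<otimes> g')"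
        using K_lemma[OF C g w0c tS] by simp
      moreover have "cj (f \<otimes> g') t \<notin> N (f \<otimes> g')" using claim2[OF B C d t f g' nt] .
      moreover have "g \<otimes> f \<otimes> g' = g \<otimes> (f \<otimes> g')" using gc fc g'c by (simp add: m_assoc)
      ultimately show "t \<notin> right_descents G S (g \<otimes> f \<otimes> g')"
        using desc_iff gc w0c by simp
    }
    {
      assume l: "cox_length G S (f \<otimes> f') = cox_length G S f + cox_length G S f'"
        and "t \<in> right_descents G S f'"
      then have "cj f' t \<in> N f'" using desc_iff f'c by simp
      then have "cj (f \<otimes> g \<otimes> f') t \<in> N (f \<otimes> g \<otimes> f')" using claim5[OF B C d t f f' g l] by simp
      then show "t \<in> right_descents G S (f \<otimes> g \<otimes> f')" using desc_iff fc gc f'c tS by simp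
    }
  qed
  show ?thesis using c0a c0b c1 c2345 by simp
qed

end

theorem lemma10p23:
  fixes G :: "('a, 'b) monoid_scheme" and S B C :: "'a set" and f f' g g' :: 'a
  assumes cox: "coxeter_system G S"
    and part: "S = B \<union> C" "B \<inter> C = {}"
    and f: "f \<in> generate G B" and f': "f' \<in> generate G B"
    and g: "g \<in> generate G C" and g': "g' \<in> generate G C"
  shows "cox_length G S (f \<otimes>\<^bsub>G\<^esub> g) = cox_length G S f + cox_length G S g
       \<and> cox_length G S (g \<otimes>\<^bsub>G\<^esub> f) = cox_length G S f + cox_length G S g
       \<and> (\<forall>s\<in>B. (\<forall>c\<in>C. s \<otimes>\<^bsub>G\<^esub> c = c \<otimes>\<^bsub>G\<^esub> s) \<longrightarrow>
             (s \<in> right_descents G S f \<longleftrightarrow>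
              s \<in> right_descents G S (g \<otimes>\<^bsub>G\<^esub> f \<otimes>\<^bsub>G\<^esub> g')))
       \<and> (\<forall>t\<in>B.
             (t \<notin> right_descents G S f \<longrightarrow> t \<notin> right_descents G S (f \<otimes>\<^bsub>G\<^esub> g))
           \<and> (t \<in> right_descents G S f \<longleftrightarrow> t \<in> right_descents G S (g \<otimes>\<^bsub>G\<^esub> f))
           \<and> (t \<notin> right_descents G S f \<longrightarrow>
                t \<notin> right_descents G S (g \<otimes>\<^bsub>G\<^esub> f \<otimes>\<^bsub>G\<^esub> g'))
           \<and> (cox_length G S (f \<otimes>\<^bsub>G\<^esub> f') = cox_length G S f + cox_length G S f' \<longrightarrow>
                t \<in> right_descents G S f' \<longrightarrow>
                t \<in> right_descents G S (f \<otimes>\<^bsub>G\<^esub> g \<otimes>\<^bsub>G\<^esub> f')))"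
proof -
  have grp: "group G" using cox unfolding coxeter_system_def by blast
  have "coxsys G S" unfolding coxsys_def coxsys_axioms_def using grp cox by blast
  then interpret c: coxsys G S .
  show ?thesis using c.main_loc[OF part f f' g g'] .
qed

end
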